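(* Let $G$ be a group and let $L,N$ be normal subgroups of $G$ with $L\geqslant N$, and $i\colon N\hookrightarrow L$ the inclusion. Assume $\mathcal{W}(G,L,N)$ is finite dimensional with $\ell=\dim_{\mathbb{R}}\mathcal{W}(G,L,N)$. Take any basis of $\mathcal{W}(G,L,N)$ and any representatives $\nu_1,\dots,\nu_\ell\in\mathrm{Q}(N)^G$ of it. Then there exist $\mathscr{C}_1,\mathscr{C}_2>0$ (depending on $\nu_1,\dots,\nu_\ell$) such that for every $\nu\in\mathrm{Q}(N)^G$ there exist $k\in\mathrm{H}^1(N)^G$ and $\psi\in\mathrm{Q}(L)^G$ with $\nu=k+i^*\psi+\sum_{j=1}^\ell a_j\nu_j$ and $$\mathscr{D}(\nu)\ge\mathscr{C}_1^{-1}\Big(\mathscr{D}(\psi)+\mathscr{C}_2^{-1}\sum_{j=1}^\ell|a_j|\Big),$$ where $(a_1,\dots,a_\ell)\in\mathbb{R}^\ell$ is the unique tuple with $[\nu]=\sum_j a_j[\nu_j]$ in $\mathcal{W}(G,L,N)$.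
   Context: For a group $H$, $\psi\colon H\to\mathbb{R}$ is homogeneous if $\psi(h^n)=n\psi(h)$; its defect is $\mathscr{D}(\psi)=\sup_{h_1,h_2\in H}|\psi(h_1h_2)-\psi(h_1)-\psi(h_2)|$; quasimorphism means finite defect. $\mathrm{Q}(N)^G$ (resp. $\mathrm{Q}(L)^G$): homogeneous quasimorphisms on $N$ (resp. $L$) invariant under conjugation by $G$; $\mathrm{H}^1(N)^G$: $G$-invariant homomorphisms $N\to\mathbb{R}$; $i^*\psi=\psi|_N$; $\mathcal{W}(G,L,N)=\mathrm{Q}(N)^G/(\mathrm{H}^1(N)^G+i^*\mathrm{Q}(L)^G)$ and $[\nu]$ denotes the class of $\nu$. If $\ell=0$ the sums are empty. *)

theory Defs
  imports "HOL-Algebra.Algebra"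
begin

text \<open>Functions H \<rightarrow> R on a subgroup H of G are modelled as total functions
  'a \<Rightarrow> real; only their values on H matter.\<close>

definition homogeneous :: "('a, 'b) monoid_scheme \<Rightarrow> 'a set \<Rightarrow> ('a \<Rightarrow> real) \<Rightarrow> bool" where
  "homogeneous G H \<psi> \<longleftrightarrow> (\<forall>h\<in>H. \<forall>n::int. \<psi> (h [^]\<^bsub>G\<^esub> n) = of_int n * \<psi> h)"

definition defect :: "('a, 'b) monoid_scheme \<Rightarrow> 'a set \<Rightarrow> ('a \<Rightarrow> real) \<Rightarrow> real" where
  "defect G H \<psi> = (SUP p\<in>H \<times> H. \<bar>\<psi> (fst p \<otimes>\<^bsub>G\<^esub> snd p) - \<psi> (fst p) - \<psi> (snd p)\<bar>)"

definition quasimorphism :: "('a, 'b) monoid_scheme \<Rightarrow> 'a set \<Rightarrow> ('a \<Rightarrow> real) \<Rightarrow> bool" where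
  "quasimorphism G H \<psi> \<longleftrightarrow>
     (\<exists>C. \<forall>x\<in>H. \<forall>y\<in>H. \<bar>\<psi> (x \<otimes>\<^bsub>G\<^esub> y) - \<psi> x - \<psi> y\<bar> \<le> C)"

definition G_invariant :: "('a, 'b) monoid_scheme \<Rightarrow> 'a set \<Rightarrow> ('a \<Rightarrow> real) \<Rightarrow> bool" where
  "G_invariant G H \<psi> \<longleftrightarrow>
     (\<forall>g\<in>carrier G. \<forall>h\<in>H. \<psi> (g \<otimes>\<^bsub>G\<^esub> h \<otimes>\<^bsub>G\<^esub> inv\<^bsub>G\<^esub> g) = \<psi> h)"

definition QG :: "('a, 'b) monoid_scheme \<Rightarrow> 'a set \<Rightarrow> ('a \<Rightarrow> real) set" where
  "QG G H = {\<psi>. homogeneous G H \<psi> \<and> quasimorphism G H \<psi> \<and> G_invariant G H \<psi>}"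

definition H1G :: "('a, 'b) monoid_scheme \<Rightarrow> 'a set \<Rightarrow> ('a \<Rightarrow> real) set" where
  "H1G G H = {k. (\<forall>x\<in>H. \<forall>y\<in>H. k (x \<otimes>\<^bsub>G\<^esub> y) = k x + k y) \<and> G_invariant G H k}"

definition in_W_kernel :: "('a, 'b) monoid_scheme \<Rightarrow> 'a set \<Rightarrow> 'a set \<Rightarrow> ('a \<Rightarrow> real) \<Rightarrow> bool" where
  "in_W_kernel G L N f \<longleftrightarrow>
     (\<exists>k \<psi>. k \<in> H1G G N \<and> \<psi> \<in> QG G L \<and> (\<forall>x\<in>N. f x = k x + \<psi> x))"

text \<open>The classes [\<nu>_0], ..., [\<nu>_{l-1}] of \<nu>_j \<in> Q(N)^G form a basis of
  W(G,L,N) = Q(N)^G / (H^1(N)^G + i^* Q(L)^G): linear independence and spanning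
  in the quotient, written out on representatives.\<close>
definition W_basis :: "('a, 'b) monoid_scheme \<Rightarrow> 'a set \<Rightarrow> 'a set \<Rightarrow> nat \<Rightarrow> (nat \<Rightarrow> 'a \<Rightarrow> real) \<Rightarrow> bool" where
  "W_basis G L N l \<nu>s \<longleftrightarrow>
     (\<forall>j<l. \<nu>s j \<in> QG G N) \<and>
     (\<forall>a::nat \<Rightarrow> real. in_W_kernel G L N (\<lambda>x. \<Sum>j<l. a j * \<nu>s j x) \<longrightarrow> (\<forall>j<l. a j = 0)) \<and>
     (\<forall>\<nu>\<in>QG G N. \<exists>a::nat \<Rightarrow> real. in_W_kernel G L N (\<lambda>x. \<nu> x - (\<Sum>j<l. a j * \<nu>s j x)))"

end

theory Submission
  imports Defs "HOL-Library.Function_Algebras" "HOL-Analysis.Product_Vector"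
begin


instantiation "fun" :: (type, real_vector) real_vector
begin
definition scaleR_fun :: "real \<Rightarrow> ('a \<Rightarrow> 'b) \<Rightarrow> 'a \<Rightarrow> 'b" where "scaleR_fun c f = (\<lambda>x. c *\<^sub>R f x)"
instance by standard (auto simp: scaleR_fun_def fun_eq_iff scaleR_add_right scaleR_add_left)
end

lemma scaleR_fun_apply [simp]: "(c *\<^sub>R f) x = c *\<^sub>R f x"
  by (simp add: scaleR_fun_def)

definition semin :: "'x::real_vector set \<Rightarrow> ('x \<Rightarrow> real) \<Rightarrow> bool" where
  "semin S p \<longleftrightarrow> (\<forall>x\<in>S. 0 \<le> p x) \<and> (\<forall>x\<in>S. \<forall>y\<in>S. p (x + y) \<le> p x + p y)
     \<and> (\<forall>c. \<forall>x\<in>S. p (c *\<^sub>R x) = \<bar>c\<bar> * p x)"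

definition csn :: "'x::real_vector set \<Rightarrow> ('x \<Rightarrow> real) \<Rightarrow> bool" where
  "csn S p \<longleftrightarrow> (\<forall>f. (\<forall>n. f n \<in> S) \<longrightarrow> (\<forall>e>0. \<exists>N. \<forall>m\<ge>N. \<forall>n\<ge>N. p (f m - f n) < e)
      \<longrightarrow> (\<exists>x\<in>S. (\<lambda>n. p (f n - x)) \<longlonglongrightarrow> 0))"

lemma sn_nonneg: "semin S p \<Longrightarrow> x \<in> S \<Longrightarrow> 0 \<le> p x"
  unfolding semin_def by blast

lemma sn_scale: "semin S p \<Longrightarrow> x \<in> S \<Longrightarrow> p (c *\<^sub>R x) = \<bar>c\<bar> * p x"
  unfolding semin_def by blast

lemma sn_add: "semin S p \<Longrightarrow> x \<in> S \<Longrightarrow> y \<in> S \<Longrightarrow> p (x + y) \<le> p x + p y"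
  unfolding semin_def by blast

lemma sn_zero: "semin S p \<Longrightarrow> subspace S \<Longrightarrow> p 0 = 0"
  using sn_scale[of S p 0 0] by (simp add: subspace_0)

lemma sn_neg: "semin S p \<Longrightarrow> x \<in> S \<Longrightarrow> p (- x) = p x"
  using sn_scale[of S p x "-1"] by simp

lemma sn_sym: "semin S p \<Longrightarrow> subspace S \<Longrightarrow> x \<in> S \<Longrightarrow> y \<in> S \<Longrightarrow> p (x - y) = p (y - x)"
  using sn_neg[of S p "y - x"] by (simp add: subspace_diff)

lemma sn_tri: "semin S p \<Longrightarrow> subspace S \<Longrightarrow> x \<in> S \<Longrightarrow> y \<in> S \<Longrightarrow> z \<in> S \<Longrightarrow>
    p (x - z) \<le> p (x - y) + p (y - z)"
  using sn_add[of S p "x - y" "y - z"] by (simp add: subspace_diff)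

lemma sn_diff: "semin S p \<Longrightarrow> subspace S \<Longrightarrow> x \<in> S \<Longrightarrow> y \<in> S \<Longrightarrow> p (x - y) \<le> p x + p y"
  using sn_add[of S p x "- y"] sn_neg[of S p y] by (simp add: subspace_neg)

lemma lin_basic:
  fixes T :: "'x::real_vector \<Rightarrow> 'y::real_vector"
  assumes Xs: "subspace Xs" and add: "\<forall>x\<in>Xs. \<forall>y\<in>Xs. T (x + y) = T x + T y"
    and sc: "\<forall>c. \<forall>x\<in>Xs. T (c *\<^sub>R x) = c *\<^sub>R T x" and xy: "x \<in> Xs" "y \<in> Xs"
  shows "T 0 = 0" "T (x - y) = T x - T y"
proof -
  have "T ((0::real) *\<^sub>R x) = 0 *\<^sub>R T x" using sc xy by blast
  then show "T 0 = 0" by (metis scaleR_zero_left)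
  have "T (x + (- y)) = T x + T (- y)"
    using add xy subspace_neg[OF Xs] by blast
  moreover have "T ((-1::real) *\<^sub>R y) = (-1::real) *\<^sub>R T y" using sc xy by blast
  ultimately show "T (x - y) = T x - T y" by simp
qed

lemma baire_step:
  fixes T :: "'x::real_vector \<Rightarrow> 'y::real_vector"
  assumes Xs: "subspace Xs" and Ys: "subspace Ys" and sp: "semin Xs p" and sq: "semin Ys q"
    and cq: "csn Ys q" and TY: "\<forall>x\<in>Xs. T x \<in> Ys"
    and surj: "\<forall>y\<in>Ys. \<exists>x\<in>Xs. q (y - T x) = 0"
  shows "\<exists>n y0 r. y0 \<in> Ys \<and> r > 0 \<and>
    (\<forall>z\<in>Ys. q (z - y0) < r \<longrightarrow> (\<forall>\<epsilon>>0. \<exists>x\<in>Xs. p x \<le> real n \<and> q (z - T x) < \<epsilon>))"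
proof (rule ccontr)
  assume C: "\<not> ?thesis"
  define P where "P n y0 r w \<longleftrightarrow> fst w \<in> Ys \<and> q (fst w - y0) < r \<and> snd w > 0 \<and>
      (\<forall>x\<in>Xs. p x \<le> real n \<longrightarrow> snd w \<le> q (fst w - T x))" for n y0 r and w :: "'y \<times> real"
  have ex: "\<exists>w. P n y0 r w" if "y0 \<in> Ys" "r > 0" for n y0 r
  proof -
    from C that obtain z where z: "z \<in> Ys" "q (z - y0) < r"
      and nz: "\<not>(\<forall>\<epsilon>>0. \<exists>x\<in>Xs. p x \<le> real n \<and> q (z - T x) < \<epsilon>)" by blast
    from nz obtain \<epsilon> where "\<epsilon> > 0" "\<forall>x\<in>Xs. p x \<le> real n \<longrightarrow> \<epsilon> \<le> q (z - T x)"
      by (auto simp: not_less)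
    then show ?thesis using z unfolding P_def by (intro exI[of _ "(z, \<epsilon>)"]) auto
  qed
  define W where "W n y0 r = (SOME w. P n y0 r w)" for n y0 r
  have W: "P n y0 r (W n y0 r)" if "y0 \<in> Ys" "r > 0" for n y0 r
    unfolding W_def using ex[OF that] by (rule someI_ex)
  define Z where "Z n y0 r = fst (W n y0 r)" for n y0 r
  define E where "E n y0 r = snd (W n y0 r)" for n y0 r
  define S where "S = rec_nat ((0::'y), (1::real))
     (\<lambda>k yr. (Z k (fst yr) (snd yr), min (E k (fst yr) (snd yr) / 2) ((snd yr - q (Z k (fst yr) (snd yr) - fst yr)) / 2)))"
  define ys where "ys k = fst (S k)" for k
  define rs where "rs k = snd (S k)" for k
  have S0: "ys 0 = 0" "rs 0 = 1" by (simp_all add: ys_def rs_def S_def)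
  have SS: "ys (Suc k) = Z k (ys k) (rs k)"
    "rs (Suc k) = min (E k (ys k) (rs k) / 2) ((rs k - q (ys (Suc k) - ys k)) / 2)" for k
    by (simp_all add: ys_def rs_def S_def)
  have inv: "ys k \<in> Ys \<and> rs k > 0" for k
  proof (induction k)
    case 0 then show ?case using S0 Ys by (simp add: subspace_0)
  next
    case (Suc k)
    then have w: "P k (ys k) (rs k) (W k (ys k) (rs k))" using W by blast
    then have "ys (Suc k) \<in> Ys" "q (ys (Suc k) - ys k) < rs k" "E k (ys k) (rs k) > 0"
      unfolding P_def SS Z_def E_def by auto
    then show ?case using SS(2)[of k] by auto
  qed
  have wk: "P k (ys k) (rs k) (W k (ys k) (rs k))" for k using W inv by blast
  have step1: "q (ys (Suc k) - ys k) + rs (Suc k) \<le> rs k" for k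
  proof -
    have "q (ys (Suc k) - ys k) < rs k" using wk[of k] unfolding P_def Z_def SS by auto
    moreover have "rs (Suc k) \<le> (rs k - q (ys (Suc k) - ys k)) / 2" unfolding SS(2)[of k] by (rule min.cobounded2)
    ultimately show ?thesis by argo
  qed
  have step2: "rs (Suc k) \<le> rs k / 2" for k
  proof -
    have "0 \<le> q (ys (Suc k) - ys k)" using sn_nonneg[OF sq] inv subspace_diff[OF Ys] by blast
    moreover have "rs (Suc k) \<le> (rs k - q (ys (Suc k) - ys k)) / 2"
      unfolding SS(2)[of k] by (rule min.cobounded2)
    ultimately show ?thesis by argo
  qed
  have step3: "rs (Suc k) \<le> E k (ys k) (rs k) / 2" for k using SS(2)[of k] by auto
  have Ek: "\<forall>x\<in>Xs. p x \<le> real k \<longrightarrow> E k (ys k) (rs k) \<le> q (ys (Suc k) - T x)" for k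
    using wk[of k] unfolding P_def SS Z_def E_def by auto
  have Epos: "E k (ys k) (rs k) > 0" for k using wk[of k] unfolding P_def E_def by auto
  have nest: "q (ys (k + d) - ys k) + rs (k + d) \<le> rs k" for k d
  proof (induction d)
    case 0 then show ?case using sn_zero[OF sq Ys] inv by auto
  next
    case (Suc d)
    have "q (ys (Suc (k + d)) - ys k) \<le> q (ys (Suc (k + d)) - ys (k + d)) + q (ys (k + d) - ys k)"
      using sn_tri[OF sq Ys] inv by blast
    then show ?case using Suc step1[of "k + d"] by simp
  qed
  have nest2: "q (ys m - ys k) \<le> rs k" if "k \<le> m" for k m
  proof -
    from le_Suc_ex[OF that] obtain d where md: "m = k + d" ..
    have "q (ys (k + d) - ys k) \<le> rs k" using nest[of k d] inv[of "k + d"] by linarith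
    then show ?thesis using md by simp
  qed
  have rsle: "rs k \<le> (1/2) ^ k" for k
  proof (induction k)
    case 0 then show ?case using S0 by simp
  next
    case (Suc k) then show ?case using step2[of k] by simp
  qed
  have cauchy: "\<exists>N. \<forall>m\<ge>N. \<forall>n\<ge>N. q (ys m - ys n) < e" if epos: "e > 0" for e
  proof -
    obtain N where N: "(1/2::real) ^ N < e / 2" using real_arch_pow_inv[of "e/2" "1/2"] epos by auto
    have "q (ys m - ys n) < e" if "m \<ge> N" "n \<ge> N" for m n
    proof -
      have "q (ys m - ys n) \<le> q (ys m - ys N) + q (ys N - ys n)"
        using sn_tri[OF sq Ys] inv by blast
      also have "q (ys N - ys n) = q (ys n - ys N)" using sn_sym[OF sq Ys] inv by blast
      finally show ?thesis using nest2[OF \<open>m \<ge> N\<close>] nest2[OF \<open>n \<ge> N\<close>] rsle[of N] N by linarith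
    qed
    then show ?thesis by blast
  qed
  obtain y where y: "y \<in> Ys" "(\<lambda>n. q (ys n - y)) \<longlonglongrightarrow> 0"
    using cq[unfolded csn_def, rule_format, of ys] inv cauchy by blast
  have close: "q (y - ys k) \<le> rs k" for k
  proof -
    have lim: "(\<lambda>m. q (ys m - y) + rs k) \<longlonglongrightarrow> 0 + rs k"
      by (intro tendsto_add y(2) tendsto_const)
    have "q (y - ys k) \<le> q (ys m - y) + rs k" if "m \<ge> k" for m
    proof -
      have "q (y - ys k) \<le> q (y - ys m) + q (ys m - ys k)"
        using sn_tri[OF sq Ys] inv y by blast
      also have "q (y - ys m) = q (ys m - y)" using sn_sym[OF sq Ys] inv y by blast
      finally show ?thesis using nest2[OF that] by linarith
    qed
    then have "\<exists>N. \<forall>m\<ge>N. q (y - ys k) \<le> q (ys m - y) + rs k" by blast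
    from LIMSEQ_le_const[OF lim this] show ?thesis by simp
  qed
  obtain x where x: "x \<in> Xs" "q (y - T x) = 0" using surj y by blast
  define n where "n = nat \<lceil>p x\<rceil>"
  have pn: "p x \<le> real n" unfolding n_def by linarith
  have "E n (ys n) (rs n) \<le> q (ys (Suc n) - T x)" using Ek[of n] x pn by blast
  also have "q (ys (Suc n) - T x) \<le> q (ys (Suc n) - y) + q (y - T x)"
    using sn_tri[OF sq Ys] inv y TY x by blast
  also have "q (ys (Suc n) - y) = q (y - ys (Suc n))" using sn_sym[OF sq Ys] inv y by blast
  finally show False using close[of "Suc n"] step3[of n] Epos[of n] x by linarith
qed


lemma approx_step:
  fixes T :: "'x::real_vector \<Rightarrow> 'y::real_vector"
  assumes Xs: "subspace Xs" and Ys: "subspace Ys" and sp: "semin Xs p" and sq: "semin Ys q"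
    and cq: "csn Ys q" and TY: "\<forall>x\<in>Xs. T x \<in> Ys"
    and Tadd: "\<forall>x\<in>Xs. \<forall>y\<in>Xs. T (x + y) = T x + T y" and Tsc: "\<forall>c. \<forall>x\<in>Xs. T (c *\<^sub>R x) = c *\<^sub>R T x"
    and surj: "\<forall>y\<in>Ys. \<exists>x\<in>Xs. q (y - T x) = 0"
  shows "\<exists>M>0. \<forall>y\<in>Ys. \<exists>x\<in>Xs. p x \<le> M * q y \<and> q (y - T x) \<le> q y / 2"
proof -
  from baire_step[OF Xs Ys sp sq cq TY surj] obtain n y0 r where y0: "y0 \<in> Ys" and r: "r > 0"
    and B0: "\<forall>z\<in>Ys. q (z - y0) < r \<longrightarrow> (\<forall>\<epsilon>>0. \<exists>x\<in>Xs. p x \<le> real n \<and> q (z - T x) < \<epsilon>)"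
    by auto
  have B: "\<exists>x\<in>Xs. p x \<le> real n \<and> q (z - T x) < \<epsilon>" if "z \<in> Ys" "q (z - y0) < r" "\<epsilon> > 0" for z \<epsilon>
    using B0 that by blast
  define M where "M = 4 * (real n + 1) / r"
  have Mpos: "M > 0" using r by (simp add: M_def)
  have "\<exists>x\<in>Xs. p x \<le> M * q y \<and> q (y - T x) \<le> q y / 2" if y: "y \<in> Ys" for y
  proof (cases "q y = 0")
    case True
    have 0: "0 \<in> Xs" using Xs by (simp add: subspace_0)
    moreover have "p 0 = 0" using sn_zero[OF sp Xs] .
    moreover have "T 0 = 0" using lin_basic(1)[OF Xs Tadd Tsc 0 0] .
    ultimately show ?thesis using True Mpos by (intro bexI[of _ 0]) auto
  next
    case False
    then have qy: "q y > 0" using sn_nonneg[OF sq y] by simp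
    define c where "c = r / (2 * q y)"
    have c: "c > 0" using r qy by (simp add: c_def)
    define z where "z = y0 + c *\<^sub>R y"
    have z: "z \<in> Ys" using Ys y0 y by (simp add: z_def subspace_add subspace_scale)
    have "q (z - y0) = c * q y" using sn_scale[OF sq y, of c] c by (simp add: z_def)
    also have "\<dots> = r / 2" using qy by (simp add: c_def)
    finally have "q (z - y0) < r" using r by simp
    from B[OF z this, of "r/8"] r obtain x1 where x1: "x1 \<in> Xs" "p x1 \<le> real n" "q (z - T x1) < r/8" by auto
    have "q (y0 - y0) < r" using sn_zero[OF sq Ys] r by simp
    from B[OF y0 this, of "r/8"] r obtain x2 where x2: "x2 \<in> Xs" "p x2 \<le> real n" "q (y0 - T x2) < r/8" by auto
    define x where "x = (1/c) *\<^sub>R (x1 - x2)"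
    have x12: "x1 - x2 \<in> Xs" using Xs x1 x2 by (simp add: subspace_diff)
    have x: "x \<in> Xs" using Xs x12 by (simp add: x_def subspace_scale)
    have "p x = (1/c) * p (x1 - x2)" using sn_scale[OF sp x12, of "1/c"] c by (simp add: x_def)
    also have "\<dots> \<le> (1/c) * (2 * real n)" using sn_diff[OF sp Xs x1(1) x2(1)] x1 x2 c
      by (intro mult_left_mono) auto
    also have "\<dots> = 4 * real n / r * q y" using qy r by (simp add: c_def field_simps)
    also have "\<dots> \<le> M * q y" using qy r
      by (intro mult_right_mono) (auto simp: M_def divide_right_mono)
    finally have px: "p x \<le> M * q y" .
    have Tx: "T x = (1/c) *\<^sub>R (T x1 - T x2)"
      using Tsc lin_basic(2)[OF Xs Tadd Tsc x1(1) x2(1)] x12 by (simp add: x_def)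
    have e1: "(z - T x1) - (y0 - T x2) = c *\<^sub>R y - (T x1 - T x2)" by (simp add: z_def algebra_simps)
    have yTx: "y - T x = (1/c) *\<^sub>R ((z - T x1) - (y0 - T x2))"
      unfolding e1 Tx using c by (simp add: scaleR_diff_right)
    have w1: "z - T x1 \<in> Ys" "y0 - T x2 \<in> Ys" using z y0 TY x1 x2 Ys by (auto simp: subspace_diff)
    have "q (y - T x) = q ((1/c) *\<^sub>R ((z - T x1) - (y0 - T x2)))" unfolding yTx ..
    also have "\<dots> = \<bar>1/c\<bar> * q ((z - T x1) - (y0 - T x2))"
      by (rule sn_scale[OF sq subspace_diff[OF Ys w1]])
    also have "\<dots> = (1/c) * q ((z - T x1) - (y0 - T x2))" using c by simp
    also have "\<dots> \<le> (1/c) * (q (z - T x1) + q (y0 - T x2))" using sn_diff[OF sq Ys w1] c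
      by (intro mult_left_mono) auto
    also have "\<dots> \<le> (1/c) * (r/4)" using x1 x2 c by (intro mult_left_mono) auto
    also have "\<dots> = q y / 2" using qy r by (simp add: c_def field_simps)
    finally show ?thesis using x px by blast
  qed
  then show ?thesis using Mpos by blast
qed

lemma open_mapping:
  fixes T :: "'x::real_vector \<Rightarrow> 'y::real_vector"
  assumes Xs: "subspace Xs" and Ys: "subspace Ys" and sp: "semin Xs p" and sq: "semin Ys q"
    and cp: "csn Xs p" and cq: "csn Ys q" and TY: "\<forall>x\<in>Xs. T x \<in> Ys"
    and Tadd: "\<forall>x\<in>Xs. \<forall>y\<in>Xs. T (x + y) = T x + T y" and Tsc: "\<forall>c. \<forall>x\<in>Xs. T (c *\<^sub>R x) = c *\<^sub>R T x"
    and Tb: "\<forall>x\<in>Xs. q (T x) \<le> K * p x"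
    and surj: "\<forall>y\<in>Ys. \<exists>x\<in>Xs. q (y - T x) = 0"
  shows "\<exists>M>0. \<forall>y\<in>Ys. \<exists>x\<in>Xs. p x \<le> M * q y \<and> q (y - T x) = 0"
proof -
  obtain M where M: "M > 0" and A: "\<forall>y\<in>Ys. \<exists>x\<in>Xs. p x \<le> M * q y \<and> q (y - T x) \<le> q y / 2"
    using approx_step[OF Xs Ys sp sq cq TY Tadd Tsc surj] by blast
  define F where "F y = (SOME x. x \<in> Xs \<and> p x \<le> M * q y \<and> q (y - T x) \<le> q y / 2)" for y
  have F: "F y \<in> Xs \<and> p (F y) \<le> M * q y \<and> q (y - T (F y)) \<le> q y / 2" if "y \<in> Ys" for y
  proof -
    have "\<exists>x. x \<in> Xs \<and> p x \<le> M * q y \<and> q (y - T x) \<le> q y / 2" using A that by blast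
    then show ?thesis unfolding F_def by (rule someI_ex)
  qed
  have 0: "0 \<in> Xs" using Xs by (simp add: subspace_0)
  have T0: "T 0 = 0" using lin_basic(1)[OF Xs Tadd Tsc 0 0] .
  have "\<exists>x\<in>Xs. p x \<le> (2 * M) * q y \<and> q (y - T x) = 0" if y: "y \<in> Ys" for y
  proof (cases "q y = 0")
    case True
    show ?thesis using True M 0 T0 sn_zero[OF sp Xs] by (intro bexI[of _ 0]) auto
  next
    case False
    then have qy: "q y > 0" using sn_nonneg[OF sq y] by simp
    define ys where "ys = rec_nat y (\<lambda>_ z. z - T (F z))"
    have ys0: "ys 0 = y" and ysS: "ys (Suc k) = ys k - T (F (ys k))" for k by (simp_all add: ys_def)
    have ysY: "ys k \<in> Ys" for k
    proof (induction k)
      case 0 then show ?case using ys0 y by simp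
    next
      case (Suc k) then show ?case using ysS[of k] F[of "ys k"] TY Ys by (simp add: subspace_diff)
    qed
    define xs where "xs k = F (ys k)" for k
    have xsX: "xs k \<in> Xs" for k unfolding xs_def using F[OF ysY[of k]] by (rule conjunct1)
    have qys: "q (ys k) \<le> q y * (1/2)^k" for k
    proof (induction k)
      case 0 then show ?case using ys0 by simp
    next
      case (Suc k)
      have "q (ys (Suc k)) \<le> q (ys k) / 2" using ysS[of k] F[OF ysY[of k]] by simp
      then show ?case using Suc by simp
    qed
    have pxs: "p (xs k) \<le> M * q y * (1/2)^k" for k
    proof -
      have "p (xs k) \<le> M * q (ys k)" using F[OF ysY[of k]] xs_def by simp
      also have "\<dots> \<le> M * (q y * (1/2)^k)" using qys[of k] M by (intro mult_left_mono) auto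
      finally show ?thesis by simp
    qed
    define s where "s n = (\<Sum>k<n. xs k)" for n
    have sX: "s n \<in> Xs" for n unfolding s_def by (rule subspace_sum[OF Xs]) (rule xsX)
    have sS: "s (Suc n) = s n + xs n" for n by (simp add: s_def)
    have ys_s: "ys n = y - T (s n)" for n
    proof (induction n)
      case 0 then show ?case using ys0 T0 by (simp add: s_def)
    next
      case (Suc n)
      have "T (s (Suc n)) = T (s n) + T (xs n)" using Tadd sX xsX sS by simp
      then show ?case using Suc ysS[of n] xs_def by simp
    qed
    have sd: "p (s (n + d) - s n) \<le> 2 * M * q y * (1/2)^n - 2 * M * q y * (1/2)^(n+d)" for n d
    proof (induction d)
      case 0 then show ?case using sn_zero[OF sp Xs] by simp
    next
      case (Suc d)
      have eq: "s (n + Suc d) - s n = (s (n + d) - s n) + xs (n + d)" using sS[of "n + d"] by simp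
      have "p (s (n + Suc d) - s n) \<le> p (s (n + d) - s n) + p (xs (n + d))"
        unfolding eq by (rule sn_add[OF sp subspace_diff[OF Xs sX sX] xsX])
      also have "\<dots> \<le> 2 * M * q y * (1/2)^n - 2 * M * q y * (1/2)^(n+d) + M * q y * (1/2)^(n+d)"
        using Suc pxs[of "n + d"] by linarith
      also have "\<dots> = 2 * M * q y * (1/2)^n - 2 * M * q y * (1/2)^(n + Suc d)" by simp
      finally show ?case .
    qed
    have sd2: "p (s m - s n) \<le> 2 * M * q y * (1/2)^n" if "n \<le> m" for m n
    proof -
      from le_Suc_ex[OF that] obtain d where md: "m = n + d" ..
      have "0 \<le> 2 * M * q y * (1/2)^(n+d)" using M qy by simp
      then show ?thesis using sd[of n d] unfolding md by linarith
    qed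
    have cauchy: "\<exists>N. \<forall>m\<ge>N. \<forall>n\<ge>N. p (s m - s n) < e" if epos: "e > 0" for e
    proof -
      have "e / (4 * M * q y) > 0" using epos M qy by simp
      then obtain N where N: "(1/2::real) ^ N < e / (4 * M * q y)" using real_arch_pow_inv[of _ "1/2"] by auto
      then have N': "4 * M * q y * (1/2::real) ^ N < e" using M qy by (simp add: field_simps)
      have "p (s m - s n) < e" if "m \<ge> N" "n \<ge> N" for m n
      proof -
        have "p (s m - s n) \<le> p (s m - s N) + p (s N - s n)" using sn_tri[OF sp Xs sX sX sX] by blast
        also have "p (s N - s n) = p (s n - s N)" using sn_sym[OF sp Xs sX sX] by blast
        finally show ?thesis using sd2[OF \<open>m \<ge> N\<close>] sd2[OF \<open>n \<ge> N\<close>] N' by linarith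
      qed
      then show ?thesis by blast
    qed
    obtain x where x: "x \<in> Xs" "(\<lambda>n. p (s n - x)) \<longlonglongrightarrow> 0"
      using cp[unfolded csn_def, rule_format, of s] sX cauchy by blast
    have px: "p x \<le> 2 * M * q y"
    proof -
      have lim: "(\<lambda>n. p (s n - x) + 2 * M * q y) \<longlonglongrightarrow> 0 + 2 * M * q y"
        by (intro tendsto_add x(2) tendsto_const)
      have "p x \<le> p (s n - x) + 2 * M * q y" for n
      proof -
        have "p x = p ((x - s n) + (s n - s 0))" by (simp add: s_def)
        also have "\<dots> \<le> p (x - s n) + p (s n - s 0)"
          using sn_add[OF sp subspace_diff[OF Xs x(1) sX] subspace_diff[OF Xs sX sX]] .
        also have "p (x - s n) = p (s n - x)" using sn_sym[OF sp Xs x(1) sX] .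
        finally show ?thesis using sd2[of 0 n] by simp
      qed
      then have "\<exists>N. \<forall>n\<ge>N. p x \<le> p (s n - x) + 2 * M * q y" by blast
      from LIMSEQ_le_const[OF lim this] show ?thesis by simp
    qed
    have qx: "q (y - T x) \<le> 0"
    proof -
      have lim: "(\<lambda>n. q y * (1/2)^n + K * p (s n - x)) \<longlonglongrightarrow> q y * 0 + K * 0"
        by (intro tendsto_add tendsto_mult tendsto_const x(2) LIMSEQ_realpow_zero) auto
      have "q (y - T x) \<le> q y * (1/2)^n + K * p (s n - x)" for n
      proof -
        have w: "y - T (s n) \<in> Ys" "T (s n) \<in> Ys" "T x \<in> Ys" using y TY sX x(1) Ys by (auto simp: subspace_diff)
        have "q (y - T x) = q ((y - T (s n)) + (T (s n) - T x))" by simp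
        also have "\<dots> \<le> q (y - T (s n)) + q (T (s n) - T x)"
          using sn_add[OF sq w(1) subspace_diff[OF Ys w(2) w(3)]] .
        also have "T (s n) - T x = T (s n - x)" using lin_basic(2)[OF Xs Tadd Tsc sX x(1)] by simp
        also have "q (T (s n - x)) \<le> K * p (s n - x)" using Tb subspace_diff[OF Xs sX x(1)] by blast
        also have "q (y - T (s n)) \<le> q y * (1/2)^n" using qys[of n] ys_s[of n] by simp
        finally show ?thesis by simp
      qed
      then have "\<exists>N. \<forall>n\<ge>N. q (y - T x) \<le> q y * (1/2)^n + K * p (s n - x)" by blast
      from LIMSEQ_le_const[OF lim this] show ?thesis by simp
    qed
    have "q (y - T x) \<ge> 0" using sn_nonneg[OF sq] y TY x(1) Ys by (simp add: subspace_diff)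
    then show ?thesis using x(1) px qx by (intro bexI[of _ x]) auto
  qed
  then show ?thesis using M by (intro exI[of _ "2 * M"]) auto
qed



lemma sum_fun_apply: "(\<Sum>i\<in>I. g i) x = (\<Sum>i\<in>I. (g i x :: real))"
  by (induction I rule: infinite_finite_induct) auto

lemma defect_upper:
  assumes "quasimorphism G H f" "x \<in> H" "y \<in> H"
  shows "\<bar>f (x \<otimes>\<^bsub>G\<^esub> y) - f x - f y\<bar> \<le> defect G H f"
proof -
  from assms(1) obtain C where C: "\<forall>x\<in>H. \<forall>y\<in>H. \<bar>f (x \<otimes>\<^bsub>G\<^esub> y) - f x - f y\<bar> \<le> C"
    unfolding quasimorphism_def by blast
  have "bdd_above ((\<lambda>p. \<bar>f (fst p \<otimes>\<^bsub>G\<^esub> snd p) - f (fst p) - f (snd p)\<bar>) ` (H \<times> H))"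
    using C by (intro bdd_aboveI2[where M=C]) auto
  then show ?thesis unfolding defect_def using assms(2,3)
    using cSUP_upper[of "(x, y)" "H \<times> H" "\<lambda>p. \<bar>f (fst p \<otimes>\<^bsub>G\<^esub> snd p) - f (fst p) - f (snd p)\<bar>"] by auto
qed

lemma defect_least:
  assumes "H \<noteq> {}" "\<And>x y. x \<in> H \<Longrightarrow> y \<in> H \<Longrightarrow> \<bar>f (x \<otimes>\<^bsub>G\<^esub> y) - f x - f y\<bar> \<le> C"
  shows "defect G H f \<le> C"
  unfolding defect_def using assms by (intro cSUP_least) auto

lemma defect_nonneg:
  assumes "quasimorphism G H f" "H \<noteq> {}"
  shows "0 \<le> defect G H f"
proof -
  obtain x where "x \<in> H" using assms(2) by blast
  then show ?thesis using defect_upper[OF assms(1), of x x] by linarith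
qed

lemma QG_subspace: "subspace (QG G H)"
proof -
  have 0: "(0 :: 'a \<Rightarrow> real) \<in> QG G H"
    unfolding QG_def homogeneous_def quasimorphism_def G_invariant_def by auto
  have add: "f + g \<in> QG G H" if "f \<in> QG G H" "g \<in> QG G H" for f g
  proof -
    from that obtain C1 C2 where C1: "\<forall>x\<in>H. \<forall>y\<in>H. \<bar>f (x \<otimes>\<^bsub>G\<^esub> y) - f x - f y\<bar> \<le> C1"
      and C2: "\<forall>x\<in>H. \<forall>y\<in>H. \<bar>g (x \<otimes>\<^bsub>G\<^esub> y) - g x - g y\<bar> \<le> C2"
      unfolding QG_def quasimorphism_def by blast
    have "\<forall>x\<in>H. \<forall>y\<in>H. \<bar>(f + g) (x \<otimes>\<^bsub>G\<^esub> y) - (f + g) x - (f + g) y\<bar> \<le> C1 + C2"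
    proof (intro ballI)
      fix x y assume xy: "x \<in> H" "y \<in> H"
      have "\<bar>(f + g) (x \<otimes>\<^bsub>G\<^esub> y) - (f + g) x - (f + g) y\<bar>
          \<le> \<bar>f (x \<otimes>\<^bsub>G\<^esub> y) - f x - f y\<bar> + \<bar>g (x \<otimes>\<^bsub>G\<^esub> y) - g x - g y\<bar>" by simp
      then show "\<bar>(f + g) (x \<otimes>\<^bsub>G\<^esub> y) - (f + g) x - (f + g) y\<bar> \<le> C1 + C2"
        using C1 C2 xy by fastforce
    qed
    then have "quasimorphism G H (f + g)" unfolding quasimorphism_def by blast
    moreover have "homogeneous G H (f + g)" using that
      unfolding QG_def homogeneous_def by (simp add: distrib_left)
    moreover have "G_invariant G H (f + g)" using that
      unfolding QG_def G_invariant_def by simp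
    ultimately show ?thesis unfolding QG_def by blast
  qed
  have sc: "c *\<^sub>R f \<in> QG G H" if "f \<in> QG G H" for f c
  proof -
    from that obtain C where C: "\<forall>x\<in>H. \<forall>y\<in>H. \<bar>f (x \<otimes>\<^bsub>G\<^esub> y) - f x - f y\<bar> \<le> C"
      unfolding QG_def quasimorphism_def by blast
    have "\<forall>x\<in>H. \<forall>y\<in>H. \<bar>(c *\<^sub>R f) (x \<otimes>\<^bsub>G\<^esub> y) - (c *\<^sub>R f) x - (c *\<^sub>R f) y\<bar> \<le> \<bar>c\<bar> * C"
    proof (intro ballI)
      fix x y assume xy: "x \<in> H" "y \<in> H"
      have "\<bar>(c *\<^sub>R f) (x \<otimes>\<^bsub>G\<^esub> y) - (c *\<^sub>R f) x - (c *\<^sub>R f) y\<bar>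
          = \<bar>c\<bar> * \<bar>f (x \<otimes>\<^bsub>G\<^esub> y) - f x - f y\<bar>" by (simp add: abs_mult[symmetric] algebra_simps)
      also have "\<dots> \<le> \<bar>c\<bar> * C" using C xy by (intro mult_left_mono) auto
      finally show "\<bar>(c *\<^sub>R f) (x \<otimes>\<^bsub>G\<^esub> y) - (c *\<^sub>R f) x - (c *\<^sub>R f) y\<bar> \<le> \<bar>c\<bar> * C" .
    qed
    then have "quasimorphism G H (c *\<^sub>R f)" unfolding quasimorphism_def by blast
    moreover have "homogeneous G H (c *\<^sub>R f)" using that
      unfolding QG_def homogeneous_def by simp
    moreover have "G_invariant G H (c *\<^sub>R f)" using that
      unfolding QG_def G_invariant_def by simp
    ultimately show ?thesis unfolding QG_def by blast
  qed
  show ?thesis unfolding subspace_def using 0 add sc by blast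
qed

lemma QG_quasi: "f \<in> QG G H \<Longrightarrow> quasimorphism G H f"
  unfolding QG_def by blast

lemma QG_semin:
  assumes H: "H \<noteq> {}"
  shows "semin (QG G H) (defect G H)"
proof -
  have nn: "\<forall>f\<in>QG G H. 0 \<le> defect G H f" using defect_nonneg[OF QG_quasi H] by blast
  have tri: "defect G H (f + g) \<le> defect G H f + defect G H g" if "f \<in> QG G H" "g \<in> QG G H" for f g
  proof (rule defect_least[OF H])
    fix x y assume xy: "x \<in> H" "y \<in> H"
    have "\<bar>(f + g) (x \<otimes>\<^bsub>G\<^esub> y) - (f + g) x - (f + g) y\<bar>
          \<le> \<bar>f (x \<otimes>\<^bsub>G\<^esub> y) - f x - f y\<bar> + \<bar>g (x \<otimes>\<^bsub>G\<^esub> y) - g x - g y\<bar>" by simp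
    then show "\<bar>(f + g) (x \<otimes>\<^bsub>G\<^esub> y) - (f + g) x - (f + g) y\<bar> \<le> defect G H f + defect G H g"
      using defect_upper[OF QG_quasi[OF that(1)] xy] defect_upper[OF QG_quasi[OF that(2)] xy] by linarith
  qed
  have le: "defect G H (c *\<^sub>R f) \<le> \<bar>c\<bar> * defect G H f" if "f \<in> QG G H" for f c
  proof (rule defect_least[OF H])
    fix x y assume xy: "x \<in> H" "y \<in> H"
    have "\<bar>(c *\<^sub>R f) (x \<otimes>\<^bsub>G\<^esub> y) - (c *\<^sub>R f) x - (c *\<^sub>R f) y\<bar>
          = \<bar>c\<bar> * \<bar>f (x \<otimes>\<^bsub>G\<^esub> y) - f x - f y\<bar>" by (simp add: abs_mult[symmetric] algebra_simps)
    also have "\<dots> \<le> \<bar>c\<bar> * defect G H f"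
      using defect_upper[OF QG_quasi[OF that] xy] by (intro mult_left_mono) auto
    finally show "\<bar>(c *\<^sub>R f) (x \<otimes>\<^bsub>G\<^esub> y) - (c *\<^sub>R f) x - (c *\<^sub>R f) y\<bar> \<le> \<bar>c\<bar> * defect G H f" .
  qed
  have sc: "defect G H (c *\<^sub>R f) = \<bar>c\<bar> * defect G H f" if f: "f \<in> QG G H" for f c
  proof (cases "c = 0")
    case True
    have "c *\<^sub>R f \<in> QG G H" by (rule subspace_scale[OF QG_subspace f])
    then have "0 \<le> defect G H (c *\<^sub>R f)" using nn by blast
    then show ?thesis using le[OF f, of c] True by simp
  next
    case False
    have cf: "c *\<^sub>R f \<in> QG G H" by (rule subspace_scale[OF QG_subspace f])
    have "defect G H f = defect G H ((1/c) *\<^sub>R (c *\<^sub>R f))" using False by simp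
    also have "\<dots> \<le> \<bar>1/c\<bar> * defect G H (c *\<^sub>R f)" by (rule le[OF cf])
    finally have "\<bar>c\<bar> * defect G H f \<le> \<bar>c\<bar> * (\<bar>1/c\<bar> * defect G H (c *\<^sub>R f))"
      by (intro mult_left_mono) auto
    also have "\<dots> = defect G H (c *\<^sub>R f)" using False by (simp add: abs_mult[symmetric])
    finally show ?thesis using le[OF f, of c] by linarith
  qed
  show ?thesis unfolding semin_def using nn tri sc by blast
qed



definition ev :: "'a \<Rightarrow> 'a \<Rightarrow> real" where "ev a = (\<lambda>z. if z = a then 1 else 0)"
definition Phi :: "('a \<Rightarrow> real) \<Rightarrow> ('a \<Rightarrow> real) \<Rightarrow> real" where
  "Phi f s = (\<Sum>z\<in>{z. s z \<noteq> 0}. s z * f z)"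
definition fsupp :: "('a \<Rightarrow> real) \<Rightarrow> bool" where "fsupp s \<longleftrightarrow> finite {z. s z \<noteq> 0}"

lemma Phi_eq: "finite A \<Longrightarrow> {z. s z \<noteq> 0} \<subseteq> A \<Longrightarrow> Phi f s = (\<Sum>z\<in>A. s z * f z)"
  unfolding Phi_def by (rule sum.mono_neutral_left) auto

lemma fsupp_add: assumes "fsupp s" "fsupp t" shows "fsupp (s + t)"
proof -
  have "{z. (s + t) z \<noteq> 0} \<subseteq> {z. s z \<noteq> 0} \<union> {z. t z \<noteq> 0}" by auto
  moreover have "finite ({z. s z \<noteq> 0} \<union> {z. t z \<noteq> 0})" using assms unfolding fsupp_def by simp
  ultimately show ?thesis unfolding fsupp_def by (rule finite_subset)
qed

lemma fsupp_diff: assumes "fsupp s" "fsupp t" shows "fsupp (s - t)"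
proof -
  have "{z. (s - t) z \<noteq> 0} \<subseteq> {z. s z \<noteq> 0} \<union> {z. t z \<noteq> 0}" by auto
  moreover have "finite ({z. s z \<noteq> 0} \<union> {z. t z \<noteq> 0})" using assms unfolding fsupp_def by simp
  ultimately show ?thesis unfolding fsupp_def by (rule finite_subset)
qed

lemma fsupp_scale: assumes "fsupp s" shows "fsupp (c *\<^sub>R s)"
proof -
  have "{z. (c *\<^sub>R s) z \<noteq> 0} \<subseteq> {z. s z \<noteq> 0}" by auto
  moreover have "finite {z. s z \<noteq> 0}" using assms unfolding fsupp_def by simp
  ultimately show ?thesis unfolding fsupp_def by (rule finite_subset)
qed

lemma fsupp_0: "fsupp 0"
  unfolding fsupp_def by simp

lemma fsupp_ev: "fsupp (ev a)"
proof -
  have "{z. ev a z \<noteq> 0} \<subseteq> {a}" by (auto simp: ev_def)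
  then show ?thesis unfolding fsupp_def by (rule finite_subset) simp
qed

lemma Phi_add: "fsupp s \<Longrightarrow> fsupp t \<Longrightarrow> Phi f (s + t) = Phi f s + Phi f t"
proof -
  assume st: "fsupp s" "fsupp t"
  let ?A = "{z. s z \<noteq> 0} \<union> {z. t z \<noteq> 0}"
  have fA: "finite ?A" using st unfolding fsupp_def by simp
  have "Phi f (s + t) = (\<Sum>z\<in>?A. (s + t) z * f z)" by (rule Phi_eq[OF fA]) auto
  also have "\<dots> = (\<Sum>z\<in>?A. s z * f z) + (\<Sum>z\<in>?A. t z * f z)"
    by (simp add: sum.distrib distrib_right)
  also have "(\<Sum>z\<in>?A. s z * f z) = Phi f s" by (rule Phi_eq[OF fA, symmetric]) auto
  also have "(\<Sum>z\<in>?A. t z * f z) = Phi f t" by (rule Phi_eq[OF fA, symmetric]) auto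
  finally show ?thesis .
qed

lemma Phi_scale: "Phi f (c *\<^sub>R s) = c * Phi f s"
proof (cases "c = 0")
  case True then show ?thesis by (simp add: Phi_def)
next
  case False
  then have "{z. (c *\<^sub>R s) z \<noteq> 0} = {z. s z \<noteq> 0}" by auto
  then show ?thesis unfolding Phi_def by (simp add: sum_distrib_left mult.assoc)
qed

lemma Phi_diff: "fsupp s \<Longrightarrow> fsupp t \<Longrightarrow> Phi f (s - t) = Phi f s - Phi f t"
proof -
  assume st: "fsupp s" "fsupp t"
  have "Phi f (s - t) = Phi f (s + (-1::real) *\<^sub>R t)"
    by (rule arg_cong[where f="Phi f"]) (simp add: fun_eq_iff)
  also have "\<dots> = Phi f s + Phi f ((-1::real) *\<^sub>R t)" by (rule Phi_add[OF st(1) fsupp_scale[OF st(2)]])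
  also have "\<dots> = Phi f s - Phi f t" using Phi_scale[of f "-1" t] by simp
  finally show ?thesis .
qed

lemma Phi_ev: "Phi f (ev a) = f a"
proof -
  have "Phi f (ev a) = (\<Sum>z\<in>{a}. ev a z * f z)" by (rule Phi_eq) (auto simp: ev_def)
  then show ?thesis by (simp add: ev_def)
qed

lemma Phi_0: "Phi f 0 = 0"
  by (simp add: Phi_def)

lemma QG_complete:
  assumes H: "H \<noteq> {}"
  shows "csn (QG G H) (defect G H)"
  unfolding csn_def
proof (intro allI impI)
  fix f :: "nat \<Rightarrow> 'a \<Rightarrow> real"
  assume fQ: "\<forall>n. f n \<in> QG G H"
    and Cau: "\<forall>e>0. \<exists>N. \<forall>m\<ge>N. \<forall>n\<ge>N. defect G H (f m - f n) < e"
  define d where "d n x y = f n (x \<otimes>\<^bsub>G\<^esub> y) - f n x - f n y" for n x y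
  have qd: "\<bar>d m x y - d n x y\<bar> \<le> defect G H (f m - f n)" if xy: "x \<in> H" "y \<in> H" for m n x y
  proof -
    have "f m - f n \<in> QG G H" by (rule subspace_diff[OF QG_subspace fQ[rule_format] fQ[rule_format]])
    from defect_upper[OF QG_quasi[OF this] xy] show ?thesis by (simp add: d_def algebra_simps)
  qed
  have dconv: "convergent (\<lambda>n. d n x y)" if xy: "x \<in> H" "y \<in> H" for x y
  proof -
    have "Cauchy (\<lambda>n. d n x y)"
    proof (rule CauchyI)
      fix e :: real assume "0 < e"
      then obtain N where N: "\<forall>m\<ge>N. \<forall>n\<ge>N. defect G H (f m - f n) < e" using Cau by blast
      have "norm (d m x y - d n x y) < e" if "m \<ge> N" "n \<ge> N" for m n
        using le_less_trans[OF qd[OF xy, of m n]] N that by simp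
      then show "\<exists>M. \<forall>m\<ge>M. \<forall>n\<ge>M. norm (d m x y - d n x y) < e" by blast
    qed
    then show ?thesis by (simp add: Cauchy_convergent_iff)
  qed
  define gens where "gens =
    {ev (x \<otimes>\<^bsub>G\<^esub> y) - ev x - ev y | x y. x \<in> H \<and> y \<in> H}
    \<union> {ev (g \<otimes>\<^bsub>G\<^esub> h \<otimes>\<^bsub>G\<^esub> inv\<^bsub>G\<^esub> g) - ev h | g h. g \<in> carrier G \<and> h \<in> H}
    \<union> {ev (h [^]\<^bsub>G\<^esub> k) - of_int k *\<^sub>R ev h | h (k::int). h \<in> H}"
  have Phi1: "Phi u (ev (x \<otimes>\<^bsub>G\<^esub> y) - ev x - ev y) = u (x \<otimes>\<^bsub>G\<^esub> y) - u x - u y" for u x y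
    by (simp add: Phi_diff fsupp_diff fsupp_ev Phi_ev)
  have Phi2: "Phi u (ev a - ev b) = u a - u b" for u a b
    by (simp add: Phi_diff fsupp_ev Phi_ev)
  have Phi3: "Phi u (ev a - c *\<^sub>R ev b) = u a - c * u b" for u a b c
    by (simp add: Phi_diff fsupp_ev fsupp_scale Phi_ev Phi_scale)
  have gens_fs: "fsupp s" if "s \<in> gens" for s
    using that unfolding gens_def by (auto intro!: fsupp_diff fsupp_ev fsupp_scale)
  have finv: "f n (g \<otimes>\<^bsub>G\<^esub> h \<otimes>\<^bsub>G\<^esub> inv\<^bsub>G\<^esub> g) = f n h" if "g \<in> carrier G" "h \<in> H" for n g h
    using fQ that unfolding QG_def G_invariant_def by blast
  have fhom: "f n (h [^]\<^bsub>G\<^esub> k) = of_int k * f n h" if "h \<in> H" for n h and k :: int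
    using fQ that unfolding QG_def homogeneous_def by blast
  have gens_conv: "convergent (\<lambda>n. Phi (f n) s)" if "s \<in> gens" for s
    using that unfolding gens_def
  proof (elim UnE CollectE exE conjE)
    fix x y assume "s = ev (x \<otimes>\<^bsub>G\<^esub> y) - ev x - ev y" "x \<in> H" "y \<in> H"
    then show ?thesis using dconv[of x y] by (simp add: Phi1 d_def)
  next
    fix g h assume "s = ev (g \<otimes>\<^bsub>G\<^esub> h \<otimes>\<^bsub>G\<^esub> inv\<^bsub>G\<^esub> g) - ev h" "g \<in> carrier G" "h \<in> H"
    then show ?thesis by (simp add: Phi2 finv convergent_const)
  next
    fix h and k :: int assume "s = ev (h [^]\<^bsub>G\<^esub> k) - of_int k *\<^sub>R ev h" "h \<in> H"
    then show ?thesis by (simp add: Phi3 fhom convergent_const)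
  qed
  obtain B where B: "B \<subseteq> gens" "independent B" "gens \<subseteq> span B"
    using maximal_independent_subset[of gens] by blast
  from linear_independent_extend[OF B(2), of "\<lambda>b. lim (\<lambda>n. Phi (f n) b)"]
  obtain \<Lambda> :: "('a \<Rightarrow> real) \<Rightarrow> real" where Lin: "linear \<Lambda>"
    and LB: "\<forall>b\<in>B. \<Lambda> b = lim (\<lambda>n. Phi (f n) b)"
    by (elim exE conjE)
  have spanP: "fsupp s \<and> (\<lambda>n. Phi (f n) s) \<longlonglongrightarrow> \<Lambda> s" if "s \<in> span B" for s
    using that
  proof (induction rule: span_induct)
    case (step b)
    then have "b \<in> gens" using B(1) by blast
    then show ?case using gens_fs gens_conv LB step by (simp add: convergent_LIMSEQ_iff)
  next
    case base
    show ?case unfolding subspace_def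
    proof (intro conjI ballI allI)
      show "0 \<in> Collect (\<lambda>s. fsupp s \<and> (\<lambda>n. Phi (f n) s) \<longlonglongrightarrow> \<Lambda> s)"
        using linear_0[OF Lin] by (simp add: fsupp_0 Phi_0)
    next
      fix s t assume "s \<in> Collect (\<lambda>s. fsupp s \<and> (\<lambda>n. Phi (f n) s) \<longlonglongrightarrow> \<Lambda> s)"
        "t \<in> Collect (\<lambda>s. fsupp s \<and> (\<lambda>n. Phi (f n) s) \<longlonglongrightarrow> \<Lambda> s)"
      then show "s + t \<in> Collect (\<lambda>s. fsupp s \<and> (\<lambda>n. Phi (f n) s) \<longlonglongrightarrow> \<Lambda> s)"
        using linear_add[OF Lin, of s t] by (auto simp: fsupp_add Phi_add intro: tendsto_add)
    next
      fix c :: real and s assume "s \<in> Collect (\<lambda>s. fsupp s \<and> (\<lambda>n. Phi (f n) s) \<longlonglongrightarrow> \<Lambda> s)"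
      then show "c *\<^sub>R s \<in> Collect (\<lambda>s. fsupp s \<and> (\<lambda>n. Phi (f n) s) \<longlonglongrightarrow> \<Lambda> s)"
        using linear_scale[OF Lin, of c s] by (auto simp: fsupp_scale Phi_scale intro: tendsto_mult_left)
    qed
  qed
  have genL: "(\<lambda>n. Phi (f n) s) \<longlonglongrightarrow> \<Lambda> s" if "s \<in> gens" for s
    using spanP B(3) that by blast
  define \<phi> where "\<phi> a = \<Lambda> (ev a)" for a
  have Ldiff: "\<Lambda> (u - v) = \<Lambda> u - \<Lambda> v" for u v using linear_diff[OF Lin] .
  have Lsc: "\<Lambda> (c *\<^sub>R u) = c * \<Lambda> u" for c u using linear_scale[OF Lin] by simp
  have dlim: "(\<lambda>n. d n x y) \<longlonglongrightarrow> \<phi> (x \<otimes>\<^bsub>G\<^esub> y) - \<phi> x - \<phi> y" if xy: "x \<in> H" "y \<in> H" for x y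
  proof -
    have "ev (x \<otimes>\<^bsub>G\<^esub> y) - ev x - ev y \<in> gens" unfolding gens_def using xy by blast
    from genL[OF this] show ?thesis by (simp add: Phi1 d_def Ldiff \<phi>_def)
  qed
  have phinv: "\<phi> (g \<otimes>\<^bsub>G\<^esub> h \<otimes>\<^bsub>G\<^esub> inv\<^bsub>G\<^esub> g) = \<phi> h" if gh: "g \<in> carrier G" "h \<in> H" for g h
  proof -
    have "ev (g \<otimes>\<^bsub>G\<^esub> h \<otimes>\<^bsub>G\<^esub> inv\<^bsub>G\<^esub> g) - ev h \<in> gens" unfolding gens_def using gh by blast
    from genL[OF this] have "(\<lambda>n. 0) \<longlonglongrightarrow> \<phi> (g \<otimes>\<^bsub>G\<^esub> h \<otimes>\<^bsub>G\<^esub> inv\<^bsub>G\<^esub> g) - \<phi> h"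
      using gh by (simp add: Phi2 finv Ldiff \<phi>_def)
    then show ?thesis by (simp add: LIMSEQ_const_iff)
  qed
  have phhom: "\<phi> (h [^]\<^bsub>G\<^esub> k) = of_int k * \<phi> h" if h: "h \<in> H" for h and k :: int
  proof -
    have "ev (h [^]\<^bsub>G\<^esub> k) - of_int k *\<^sub>R ev h \<in> gens" unfolding gens_def using h by blast
    from genL[OF this] have "(\<lambda>n. 0) \<longlonglongrightarrow> \<phi> (h [^]\<^bsub>G\<^esub> k) - of_int k * \<phi> h"
      using h by (simp add: Phi3 fhom Ldiff Lsc \<phi>_def)
    then show ?thesis by (simp add: LIMSEQ_const_iff)
  qed
  have close: "\<exists>N. \<forall>n\<ge>N. \<forall>x\<in>H. \<forall>y\<in>H. \<bar>d n x y - (\<phi> (x \<otimes>\<^bsub>G\<^esub> y) - \<phi> x - \<phi> y)\<bar> \<le> e"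
    if epos: "e > 0" for e
  proof -
    obtain N where N: "\<forall>m\<ge>N. \<forall>n\<ge>N. defect G H (f m - f n) < e" using Cau epos by blast
    have "\<bar>d n x y - (\<phi> (x \<otimes>\<^bsub>G\<^esub> y) - \<phi> x - \<phi> y)\<bar> \<le> e" if "n \<ge> N" "x \<in> H" "y \<in> H" for n x y
    proof -
      have lim: "(\<lambda>m. \<bar>d n x y - d m x y\<bar>) \<longlonglongrightarrow> \<bar>d n x y - (\<phi> (x \<otimes>\<^bsub>G\<^esub> y) - \<phi> x - \<phi> y)\<bar>"
        by (intro tendsto_rabs tendsto_diff tendsto_const dlim that(2,3))
      have "\<forall>m\<ge>N. \<bar>d n x y - d m x y\<bar> \<le> e"
        using N qd[OF that(2,3), of n] that(1) by (meson less_imp_le order_trans)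
      then show ?thesis using LIMSEQ_le_const2[OF lim] by blast
    qed
    then show ?thesis by blast
  qed
  obtain N1 where N1: "\<forall>n\<ge>N1. \<forall>x\<in>H. \<forall>y\<in>H. \<bar>d n x y - (\<phi> (x \<otimes>\<^bsub>G\<^esub> y) - \<phi> x - \<phi> y)\<bar> \<le> 1"
    using close[of 1] by auto
  have "quasimorphism G H \<phi>"
    unfolding quasimorphism_def
  proof (intro exI ballI)
    fix x y assume xy: "x \<in> H" "y \<in> H"
    have "\<bar>d N1 x y\<bar> \<le> defect G H (f N1)" using defect_upper[OF QG_quasi[OF fQ[rule_format]] xy] by (simp add: d_def)
    moreover have "\<bar>d N1 x y - (\<phi> (x \<otimes>\<^bsub>G\<^esub> y) - \<phi> x - \<phi> y)\<bar> \<le> 1" using N1 xy by blast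
    ultimately show "\<bar>\<phi> (x \<otimes>\<^bsub>G\<^esub> y) - \<phi> x - \<phi> y\<bar> \<le> defect G H (f N1) + 1" by linarith
  qed
  then have phQ: "\<phi> \<in> QG G H"
    unfolding QG_def homogeneous_def G_invariant_def using phinv phhom by blast
  have "(\<lambda>n. defect G H (f n - \<phi>)) \<longlonglongrightarrow> 0"
  proof (rule LIMSEQ_I)
    fix r :: real assume r: "0 < r"
    obtain N where N: "\<forall>n\<ge>N. \<forall>x\<in>H. \<forall>y\<in>H. \<bar>d n x y - (\<phi> (x \<otimes>\<^bsub>G\<^esub> y) - \<phi> x - \<phi> y)\<bar> \<le> r / 2"
      using close[of "r/2"] r by auto
    have "norm (defect G H (f n - \<phi>) - 0) < r" if "n \<ge> N" for n
    proof -
      have le: "defect G H (f n - \<phi>) \<le> r / 2"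
      proof (rule defect_least[OF H])
        fix x y assume xy: "x \<in> H" "y \<in> H"
        show "\<bar>(f n - \<phi>) (x \<otimes>\<^bsub>G\<^esub> y) - (f n - \<phi>) x - (f n - \<phi>) y\<bar> \<le> r / 2"
          using N that xy by (simp add: d_def algebra_simps)
      qed
      have "f n - \<phi> \<in> QG G H" by (rule subspace_diff[OF QG_subspace fQ[rule_format] phQ])
      then have "0 \<le> defect G H (f n - \<phi>)" using defect_nonneg[OF QG_quasi H] by blast
      then show ?thesis using le r by simp
    qed
    then show "\<exists>no. \<forall>n\<ge>no. norm (defect G H (f n - \<phi>) - 0) < r" by blast
  qed
  then show "\<exists>x\<in>QG G H. (\<lambda>n. defect G H (f n - x)) \<longlonglongrightarrow> 0" using phQ by blast
qed



lemma QG_mono: assumes "N \<subseteq> L" "f \<in> QG G L" shows "f \<in> QG G N"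
proof -
  from assms(2) have h: "homogeneous G L f" and qm: "quasimorphism G L f" and gi: "G_invariant G L f"
    unfolding QG_def by auto
  have "homogeneous G N f" using h assms(1) unfolding homogeneous_def by blast
  moreover have "quasimorphism G N f" using qm assms(1) unfolding quasimorphism_def by blast
  moreover have "G_invariant G N f" using gi assms(1) unfolding G_invariant_def by blast
  ultimately show ?thesis unfolding QG_def by blast
qed

lemma defect_mono:
  assumes "N \<subseteq> L" "N \<noteq> {}" "quasimorphism G L f"
  shows "defect G N f \<le> defect G L f"
proof (rule defect_least[OF assms(2)])
  fix x y assume "x \<in> N" "y \<in> N"
  then show "\<bar>f (x \<otimes>\<^bsub>G\<^esub> y) - f x - f y\<bar> \<le> defect G L f"
    using defect_upper[OF assms(3)] assms(1) by blast
qed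

lemma sn_sum:
  assumes sp: "semin S p" and S: "subspace S" and fin: "finite I" and g: "\<forall>i\<in>I. g i \<in> S"
  shows "p (sum g I) \<le> (\<Sum>i\<in>I. p (g i))"
  using fin g
proof (induction I rule: finite_induct)
  case empty then show ?case using sn_zero[OF sp S] by simp
next
  case (insert x F)
  have gF: "sum g F \<in> S" using insert(4) by (intro subspace_sum[OF S]) auto
  have "p (sum g (insert x F)) = p (g x + sum g F)" using insert(1,2) by simp
  also have "\<dots> \<le> p (g x) + p (sum g F)" using sn_add[OF sp _ gF] insert(4) by simp
  also have "\<dots> \<le> p (g x) + (\<Sum>i\<in>F. p (g i))" using insert by simp
  finally show ?case using insert(1,2) by simp
qed

theorem theorem5p2:
  fixes G :: "('a, 'b) monoid_scheme" and L N :: "'a set"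
    and l :: nat and \<nu>s :: "nat \<Rightarrow> 'a \<Rightarrow> real"
  assumes "group G" and "L \<lhd> G" and "N \<lhd> G" and "N \<subseteq> L"
    and "W_basis G L N l \<nu>s"
  shows "\<exists>C1 C2 :: real. C1 > 0 \<and> C2 > 0 \<and>
    (\<forall>\<nu>\<in>QG G N. \<exists>k \<psi> (a :: nat \<Rightarrow> real).
        k \<in> H1G G N \<and> \<psi> \<in> QG G L \<and>
        (\<forall>x\<in>N. \<nu> x = k x + \<psi> x + (\<Sum>j<l. a j * \<nu>s j x)) \<and>
        defect G N \<nu> \<ge> (1 / C1) * (defect G L \<psi> + (1 / C2) * (\<Sum>j<l. \<bar>a j\<bar>)))"
proof -
  have subN: "subgroup N G" using assms(3) by (rule normal_imp_subgroup)
  have N1: "N \<noteq> {}" using subgroup.one_closed[OF subN] by blast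
  have L1: "L \<noteq> {}" using N1 assms(4) by blast
  have NL: "N \<subseteq> L" by (rule assms(4))
  have \<nu>Q: "\<forall>j<l. \<nu>s j \<in> QG G N"
    and spanW: "\<forall>\<nu>\<in>QG G N. \<exists>a::nat \<Rightarrow> real. in_W_kernel G L N (\<lambda>x. \<nu> x - (\<Sum>j<l. a j * \<nu>s j x))"
    using assms(5) unfolding W_basis_def by blast+
  define Xs where "Xs = QG G L \<times> (UNIV :: (nat \<Rightarrow> real) set)"
  define p where "p = (\<lambda>z :: ('a \<Rightarrow> real) \<times> (nat \<Rightarrow> real). defect G L (fst z) + (\<Sum>j<l. \<bar>snd z j\<bar>))"
  define T where "T = (\<lambda>z :: ('a \<Rightarrow> real) \<times> (nat \<Rightarrow> real). fst z + (\<Sum>j<l. snd z j *\<^sub>R \<nu>s j))"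
  have QL: "subspace (QG G L)" by (rule QG_subspace)
  have QN: "subspace (QG G N)" by (rule QG_subspace)
  have semL: "semin (QG G L) (defect G L)" by (rule QG_semin[OF L1])
  have semN: "semin (QG G N) (defect G N)" by (rule QG_semin[OF N1])
  have Xsub: "subspace Xs"
    unfolding subspace_def
  proof (intro conjI ballI allI)
    show "0 \<in> Xs" using subspace_0[OF QL] by (simp add: Xs_def zero_prod_def)
  next
    fix x y assume "x \<in> Xs" "y \<in> Xs"
    then show "x + y \<in> Xs" using subspace_add[OF QL] by (simp add: Xs_def mem_Times_iff)
  next
    fix c :: real and x assume "x \<in> Xs"
    then show "c *\<^sub>R x \<in> Xs" using subspace_scale[OF QL] by (simp add: Xs_def mem_Times_iff)
  qed
  have fstX: "fst x \<in> QG G L" if "x \<in> Xs" for x using that by (simp add: Xs_def mem_Times_iff)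
  have pnn: "0 \<le> p x" if "x \<in> Xs" for x
    using sn_nonneg[OF semL fstX[OF that]] by (simp add: p_def sum_nonneg)
  have Xsemin: "semin Xs p"
    unfolding semin_def
  proof (intro conjI ballI allI)
    fix x assume "x \<in> Xs" then show "0 \<le> p x" by (rule pnn)
  next
    fix x y assume xy: "x \<in> Xs" "y \<in> Xs"
    have "defect G L (fst x + fst y) \<le> defect G L (fst x) + defect G L (fst y)"
      by (rule sn_add[OF semL fstX[OF xy(1)] fstX[OF xy(2)]])
    moreover have "(\<Sum>j<l. \<bar>snd x j + snd y j\<bar>) \<le> (\<Sum>j<l. \<bar>snd x j\<bar>) + (\<Sum>j<l. \<bar>snd y j\<bar>)"
      unfolding sum.distrib[symmetric] by (rule sum_mono) (rule abs_triangle_ineq)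
    ultimately show "p (x + y) \<le> p x + p y" by (simp add: p_def)
  next
    fix c :: real and x assume x: "x \<in> Xs"
    have "defect G L (c *\<^sub>R fst x) = \<bar>c\<bar> * defect G L (fst x)" by (rule sn_scale[OF semL fstX[OF x]])
    moreover have "(\<Sum>j<l. \<bar>c * snd x j\<bar>) = \<bar>c\<bar> * (\<Sum>j<l. \<bar>snd x j\<bar>)"
      by (simp add: abs_mult sum_distrib_left)
    ultimately show "p (c *\<^sub>R x) = \<bar>c\<bar> * p x" by (simp add: p_def distrib_left)
  qed
  have Xcsn: "csn Xs p"
    unfolding csn_def
  proof (intro allI impI)
    fix F :: "nat \<Rightarrow> ('a \<Rightarrow> real) \<times> (nat \<Rightarrow> real)"
    assume FX: "\<forall>n. F n \<in> Xs" and Cau: "\<forall>e>0. \<exists>N. \<forall>m\<ge>N. \<forall>n\<ge>N. p (F m - F n) < e"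
    have pdiff: "defect G L (fst (F m) - fst (F n)) + (\<Sum>j<l. \<bar>snd (F m) j - snd (F n) j\<bar>) = p (F m - F n)" for m n
      by (simp add: p_def)
    have dfst: "defect G L (fst (F m) - fst (F n)) \<le> p (F m - F n)" for m n
    proof -
      have "0 \<le> (\<Sum>j<l. \<bar>snd (F m) j - snd (F n) j\<bar>)" by (simp add: sum_nonneg)
      then show ?thesis using pdiff[of m n] by linarith
    qed
    have dsnd: "\<bar>snd (F m) j - snd (F n) j\<bar> \<le> p (F m - F n)" if "j < l" for m n j
    proof -
      have "\<bar>snd (F m) j - snd (F n) j\<bar> \<le> (\<Sum>j<l. \<bar>snd (F m) j - snd (F n) j\<bar>)"
        using that by (intro member_le_sum) auto
      moreover have "0 \<le> defect G L (fst (F m) - fst (F n))"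
        using sn_nonneg[OF semL subspace_diff[OF QL fstX fstX]] FX by blast
      ultimately show ?thesis using pdiff[of m n] by linarith
    qed
    have "\<exists>\<psi>\<in>QG G L. (\<lambda>n. defect G L (fst (F n) - \<psi>)) \<longlonglongrightarrow> 0"
    proof (rule QG_complete[OF L1, unfolded csn_def, rule_format])
      show "fst (F n) \<in> QG G L" for n using FX fstX by blast
      fix e :: real assume "e > 0"
      then obtain N0 where "\<forall>m\<ge>N0. \<forall>n\<ge>N0. p (F m - F n) < e" using Cau by blast
      then show "\<exists>N. \<forall>m\<ge>N. \<forall>n\<ge>N. defect G L (fst (F m) - fst (F n)) < e"
        using dfst le_less_trans by blast
    qed
    then obtain \<psi> where \<psi>: "\<psi> \<in> QG G L" "(\<lambda>n. defect G L (fst (F n) - \<psi>)) \<longlonglongrightarrow> 0" by blast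
    have conv: "convergent (\<lambda>n. snd (F n) j)" if j: "j < l" for j
    proof -
      have "Cauchy (\<lambda>n. snd (F n) j)"
      proof (rule CauchyI)
        fix e :: real assume "0 < e"
        then obtain N0 where N0: "\<forall>m\<ge>N0. \<forall>n\<ge>N0. p (F m - F n) < e" using Cau by blast
        have "norm (snd (F m) j - snd (F n) j) < e" if "m \<ge> N0" "n \<ge> N0" for m n
          using le_less_trans[OF dsnd[OF j, of m n]] N0 that by simp
        then show "\<exists>M. \<forall>m\<ge>M. \<forall>n\<ge>M. norm (snd (F m) j - snd (F n) j) < e" by blast
      qed
      then show ?thesis by (simp add: Cauchy_convergent_iff)
    qed
    define a where "a j = lim (\<lambda>n. snd (F n) j)" for j
    have alim: "(\<lambda>n. snd (F n) j) \<longlonglongrightarrow> a j" if "j < l" for j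
      using conv[OF that] unfolding a_def by (simp add: convergent_LIMSEQ_iff)
    have e: "p (F n - (\<psi>, a)) = defect G L (fst (F n) - \<psi>) + (\<Sum>j<l. \<bar>snd (F n) j - a j\<bar>)" for n
      by (simp add: p_def)
    have "(\<lambda>n. defect G L (fst (F n) - \<psi>) + (\<Sum>j<l. \<bar>snd (F n) j - a j\<bar>)) \<longlonglongrightarrow> 0 + (\<Sum>j<l. \<bar>a j - a j\<bar>)"
      by (intro tendsto_add \<psi>(2) tendsto_sum tendsto_rabs tendsto_diff alim tendsto_const) auto
    then have "(\<lambda>n. p (F n - (\<psi>, a))) \<longlonglongrightarrow> 0" unfolding e by simp
    moreover have "(\<psi>, a) \<in> Xs" using \<psi>(1) by (simp add: Xs_def)
    ultimately show "\<exists>x\<in>Xs. (\<lambda>n. p (F n - x)) \<longlonglongrightarrow> 0" by blast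
  qed
  have sumQ: "(\<Sum>j<l. c j *\<^sub>R \<nu>s j) \<in> QG G N" for c :: "nat \<Rightarrow> real"
    using \<nu>Q by (intro subspace_sum[OF QN] subspace_scale[OF QN]) auto
  have TY: "\<forall>x\<in>Xs. T x \<in> QG G N"
  proof
    fix x assume "x \<in> Xs"
    then have "fst x \<in> QG G N" using QG_mono[OF NL] fstX by blast
    then show "T x \<in> QG G N" unfolding T_def by (rule subspace_add[OF QN _ sumQ])
  qed
  have Tadd: "\<forall>x\<in>Xs. \<forall>y\<in>Xs. T (x + y) = T x + T y"
    by (simp add: T_def scaleR_add_left sum.distrib algebra_simps)
  have Tsc: "\<forall>c. \<forall>x\<in>Xs. T (c *\<^sub>R x) = c *\<^sub>R T x"
    by (simp add: T_def scaleR_add_right scaleR_sum_right)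
  define SD where "SD = (\<Sum>j<l. defect G N (\<nu>s j))"
  have SDnn: "0 \<le> defect G N (\<nu>s j)" if "j < l" for j using sn_nonneg[OF semN] \<nu>Q that by blast
  have SDge: "defect G N (\<nu>s j) \<le> SD" if "j < l" for j
    unfolding SD_def using that SDnn by (intro member_le_sum) auto
  have SD0: "0 \<le> SD" unfolding SD_def using SDnn by (intro sum_nonneg) auto
  have Tb: "\<forall>x\<in>Xs. defect G N (T x) \<le> (1 + SD) * p x"
  proof
    fix x assume x: "x \<in> Xs"
    have fN: "fst x \<in> QG G N" using QG_mono[OF NL] fstX[OF x] by blast
    have "defect G N (T x) \<le> defect G N (fst x) + defect G N (\<Sum>j<l. snd x j *\<^sub>R \<nu>s j)"
      unfolding T_def by (rule sn_add[OF semN fN sumQ])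
    also have "defect G N (fst x) \<le> defect G L (fst x)"
      by (rule defect_mono[OF NL N1 QG_quasi[OF fstX[OF x]]])
    also have "defect G N (\<Sum>j<l. snd x j *\<^sub>R \<nu>s j) \<le> (\<Sum>j<l. defect G N (snd x j *\<^sub>R \<nu>s j))"
      using \<nu>Q by (intro sn_sum[OF semN QN]) (auto intro: subspace_scale[OF QN])
    also have "\<dots> = (\<Sum>j<l. \<bar>snd x j\<bar> * defect G N (\<nu>s j))"
      using \<nu>Q by (intro sum.cong refl sn_scale[OF semN]) auto
    also have "\<dots> \<le> (\<Sum>j<l. \<bar>snd x j\<bar> * SD)"
      using SDge by (intro sum_mono mult_left_mono) auto
    also have "\<dots> = SD * (\<Sum>j<l. \<bar>snd x j\<bar>)" by (simp add: sum_distrib_left mult.commute)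
    finally have 1: "defect G N (T x) \<le> defect G L (fst x) + SD * (\<Sum>j<l. \<bar>snd x j\<bar>)" by simp
    have D0: "0 \<le> defect G L (fst x)" using sn_nonneg[OF semL fstX[OF x]] .
    have A0: "0 \<le> (\<Sum>j<l. \<bar>snd x j\<bar>)" by (simp add: sum_nonneg)
    have "(1 + SD) * p x = defect G L (fst x) + SD * (\<Sum>j<l. \<bar>snd x j\<bar>) + (SD * defect G L (fst x) + (\<Sum>j<l. \<bar>snd x j\<bar>))"
      by (simp add: p_def algebra_simps)
    moreover have "0 \<le> SD * defect G L (fst x)" using SD0 D0 by simp
    ultimately show "defect G N (T x) \<le> (1 + SD) * p x" using 1 A0 by linarith
  qed
  have surj: "\<forall>y\<in>QG G N. \<exists>x\<in>Xs. defect G N (y - T x) = 0"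
  proof
    fix y assume y: "y \<in> QG G N"
    from spanW y obtain a where "in_W_kernel G L N (\<lambda>x. y x - (\<Sum>j<l. a j * \<nu>s j x))" by blast
    then obtain k \<psi> where k: "k \<in> H1G G N" and \<psi>: "\<psi> \<in> QG G L"
      and eq: "\<forall>x\<in>N. y x - (\<Sum>j<l. a j * \<nu>s j x) = k x + \<psi> x"
      unfolding in_W_kernel_def by blast
    have x: "(\<psi>, a) \<in> Xs" using \<psi> by (simp add: Xs_def)
    have ev: "(y - T (\<psi>, a)) z = k z" if "z \<in> N" for z
    proof -
      have "y z - (\<Sum>j<l. a j * \<nu>s j z) = k z + \<psi> z" using eq that by blast
      then show ?thesis by (simp add: T_def sum_fun_apply)
    qed
    have kadd: "k (z1 \<otimes>\<^bsub>G\<^esub> z2) = k z1 + k z2" if "z1 \<in> N" "z2 \<in> N" for z1 z2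
      using k that unfolding H1G_def by blast
    have "defect G N (y - T (\<psi>, a)) \<le> 0"
    proof (rule defect_least[OF N1])
      fix z1 z2 assume z: "z1 \<in> N" "z2 \<in> N"
      then have "z1 \<otimes>\<^bsub>G\<^esub> z2 \<in> N" using subgroup.m_closed[OF subN] by blast
      then show "\<bar>(y - T (\<psi>, a)) (z1 \<otimes>\<^bsub>G\<^esub> z2) - (y - T (\<psi>, a)) z1 - (y - T (\<psi>, a)) z2\<bar> \<le> 0"
        using ev z kadd by simp
    qed
    moreover have "0 \<le> defect G N (y - T (\<psi>, a))"
      using sn_nonneg[OF semN subspace_diff[OF QN y]] TY x by blast
    ultimately show "\<exists>x\<in>Xs. defect G N (y - T x) = 0" using x by (intro bexI[of _ "(\<psi>, a)"]) auto
  qed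
  obtain M where M: "M > 0" and OM: "\<forall>y\<in>QG G N. \<exists>x\<in>Xs. p x \<le> M * defect G N y \<and> defect G N (y - T x) = 0"
    using open_mapping[OF Xsub QN Xsemin semN Xcsn QG_complete[OF N1] TY Tadd Tsc Tb surj] by blast
  have main: "\<exists>k \<psi> (a :: nat \<Rightarrow> real).
        k \<in> H1G G N \<and> \<psi> \<in> QG G L \<and>
        (\<forall>x\<in>N. \<nu> x = k x + \<psi> x + (\<Sum>j<l. a j * \<nu>s j x)) \<and>
        defect G N \<nu> \<ge> (1 / M) * (defect G L \<psi> + (1 / 1) * (\<Sum>j<l. \<bar>a j\<bar>))" if \<nu>: "\<nu> \<in> QG G N" for \<nu>
  proof -
    from OM \<nu> obtain x where x: "x \<in> Xs" "p x \<le> M * defect G N \<nu>" "defect G N (\<nu> - T x) = 0" by blast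
    define k where "k = \<nu> - T x"
    have kQ: "k \<in> QG G N" unfolding k_def using subspace_diff[OF QN \<nu>] TY x(1) by blast
    have kadd: "k (z1 \<otimes>\<^bsub>G\<^esub> z2) = k z1 + k z2" if "z1 \<in> N" "z2 \<in> N" for z1 z2
      using defect_upper[OF QG_quasi[OF kQ] that] x(3) unfolding k_def by simp
    have kH: "k \<in> H1G G N" using kadd kQ unfolding H1G_def QG_def by blast
    have rep: "\<nu> z = k z + fst x z + (\<Sum>j<l. snd x j * \<nu>s j z)" for z
      by (simp add: k_def T_def sum_fun_apply)
    have "p x / M \<le> defect G N \<nu>" using x(2) M by (simp add: divide_le_eq mult.commute)
    then have "defect G N \<nu> \<ge> (1 / M) * (defect G L (fst x) + (1 / 1) * (\<Sum>j<l. \<bar>snd x j\<bar>))"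
      by (simp add: p_def)
    then show ?thesis using kH fstX[OF x(1)] rep by blast
  qed
  show ?thesis using M main by (intro exI[of _ M] exI[of _ "1::real"]) auto
qed


end
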